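(* Let $p,q$ be positive integers with $2\le p/q<4$, and let $f,g$ be $(p,q)$-colourings of a connected graph $G$. If $f$ reconfigures to $g$, then there is a reconfiguration sequence from $f$ to $g$ of length $O(|V(G)|^2)$.
   Context: A $(p,q)$-colouring of $G$ is a map $f:V(G)\to\{0,\dots,p-1\}$ with $q\le|f(u)-f(v)|\le p-q$ for every edge $uv$. A reconfiguration sequence from $f$ to $g$ is a sequence $f=f_0,\dots,f_n=g$ of $(p,q)$-colourings in which consecutive colourings differ on at most one vertex; $f$ reconfigures to $g$ if one exists. The implicit constant may depend on $p,q$. *)

theory Defs
  imports Main
begin

definition simple_graph :: "'a set \<Rightarrow> ('a \<Rightarrow> 'a \<Rightarrow> bool) \<Rightarrow> bool" where
  "simple_graph V E \<longleftrightarrow> finite V \<and> (\<forall>u v. E u v \<longrightarrow> u \<in> V \<and> v \<in> V)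
     \<and> (\<forall>u v. E u v \<longrightarrow> E v u) \<and> (\<forall>v. \<not> E v v)"

definition graph_connected :: "'a set \<Rightarrow> ('a \<Rightarrow> 'a \<Rightarrow> bool) \<Rightarrow> bool" where
  "graph_connected V E \<longleftrightarrow>
     (\<forall>u\<in>V. \<forall>v\<in>V. (u, v) \<in> {(x, y). E x y}\<^sup>*)"

definition pq_colouring :: "nat \<Rightarrow> nat \<Rightarrow> 'a set \<Rightarrow> ('a \<Rightarrow> 'a \<Rightarrow> bool) \<Rightarrow> ('a \<Rightarrow> nat) \<Rightarrow> bool" where
  "pq_colouring p q V E f \<longleftrightarrow> (\<forall>v\<in>V. f v < p) \<and>
     (\<forall>u\<in>V. \<forall>v\<in>V. E u v \<longrightarrow>
        int q \<le> \<bar>int (f u) - int (f v)\<bar> \<and> \<bar>int (f u) - int (f v)\<bar> \<le> int p - int q)"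

definition differ_le_one :: "'a set \<Rightarrow> ('a \<Rightarrow> nat) \<Rightarrow> ('a \<Rightarrow> nat) \<Rightarrow> bool" where
  "differ_le_one V f g \<longleftrightarrow> card {v \<in> V. f v \<noteq> g v} \<le> 1"

text \<open>A reconfiguration sequence f_0, ..., f_n from f to g, given as a nonempty list;
its length is n = length fs - 1. Colourings are compared on V only.\<close>
definition reconf_seq :: "nat \<Rightarrow> nat \<Rightarrow> 'a set \<Rightarrow> ('a \<Rightarrow> 'a \<Rightarrow> bool)
    \<Rightarrow> ('a \<Rightarrow> nat) \<Rightarrow> ('a \<Rightarrow> nat) \<Rightarrow> ('a \<Rightarrow> nat) list \<Rightarrow> bool" where
  "reconf_seq p q V E f g fs \<longleftrightarrow> fs \<noteq> [] \<and>
     (\<forall>v\<in>V. hd fs v = f v) \<and> (\<forall>v\<in>V. last fs v = g v) \<and>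
     (\<forall>h\<in>set fs. pq_colouring p q V E h) \<and>
     (\<forall>i. Suc i < length fs \<longrightarrow> differ_le_one V (fs ! i) (fs ! Suc i))"

definition reconfigures :: "nat \<Rightarrow> nat \<Rightarrow> 'a set \<Rightarrow> ('a \<Rightarrow> 'a \<Rightarrow> bool)
    \<Rightarrow> ('a \<Rightarrow> nat) \<Rightarrow> ('a \<Rightarrow> nat) \<Rightarrow> bool" where
  "reconfigures p q V E f g \<longleftrightarrow> (\<exists>fs. reconf_seq p q V E f g fs)"

end

theory Submission imports Defs begin

lemma mod_small_int: "(0::int) \<le> a \<Longrightarrow> a < p \<Longrightarrow> a mod p = a"
  by simp

lemma cong_eq_int:
  fixes a b p :: int
  assumes "p > 0" "a mod p = b mod p" "\<bar>a - b\<bar> < p"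
  shows "a = b"
proof -
  have "a - b = p * (a div p - b div p)"
    using assms(2) by (metis div_mult_mod_eq mult.commute right_diff_distrib' add_diff_cancel_right' diff_diff_eq2)
  then obtain k where k: "a - b = p * k" by blast
  have "p * k < p * 1" using k assms(3) by simp
  hence "k < 1" using assms(1) mult_less_cancel_left_pos by blast
  moreover have "p * (-1) < p * k" using k assms(3) by simp
  hence "-1 < k" using assms(1) mult_less_cancel_left_pos by blast
  ultimately have "k = 0" by simp
  thus ?thesis using k by simp
qed


lemma differ_sym: "differ_le_one V g h = differ_le_one V h g"
proof -
  have "{v\<in>V. g v \<noteq> h v} = {v\<in>V. h v \<noteq> g v}" by auto
  thus ?thesis unfolding differ_le_one_def by simp
qed

lemma differ_cong: assumes "\<forall>v\<in>V. g v = g' v" "\<forall>v\<in>V. h v = h' v" shows "differ_le_one V g h = differ_le_one V g' h'"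
proof -
  have "{v\<in>V. g v \<noteq> h v} = {v\<in>V. g' v \<noteq> h' v}" using assms by auto
  thus ?thesis unfolding differ_le_one_def by simp
qed

lemma rs_single: "pq_colouring p q V E h \<Longrightarrow> \<forall>v\<in>V. h v = c v \<Longrightarrow> reconf_seq p q V E h c [h]"
  unfolding reconf_seq_def by auto

lemma rs_cons:
  assumes "reconf_seq p q V E b c cs" "pq_colouring p q V E h" "differ_le_one V h b"
  shows "reconf_seq p q V E h c (h # cs)"
  unfolding reconf_seq_def
proof (intro conjI allI impI)
  have cs: "cs \<noteq> []" "\<forall>v\<in>V. hd cs v = b v" "\<forall>v\<in>V. last cs v = c v"
    "\<forall>h\<in>set cs. pq_colouring p q V E h"
    "\<And>i. Suc i < length cs \<Longrightarrow> differ_le_one V (cs ! i) (cs ! Suc i)"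
    using assms(1) unfolding reconf_seq_def by auto
  show "h # cs \<noteq> []" by simp
  show "\<forall>v\<in>V. hd (h # cs) v = h v" by simp
  show "\<forall>v\<in>V. last (h # cs) v = c v" using cs by simp
  show "\<forall>g\<in>set (h # cs). pq_colouring p q V E g" using cs assms(2) by simp
  fix i assume i: "Suc i < length (h # cs)"
  show "differ_le_one V ((h # cs) ! i) ((h # cs) ! Suc i)"
  proof (cases i)
    case 0
    have "cs ! 0 = hd cs" using cs(1) by (simp add: hd_conv_nth)
    thus ?thesis using 0 assms(3) differ_cong[of V h h b "hd cs"] cs(2) by simp
  next
    case (Suc j) thus ?thesis using i cs(5)[of j] by simp
  qed
qed

lemma rs_rev:
  assumes "reconf_seq p q V E a b fs"
  shows "reconf_seq p q V E b a (rev fs)"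
  unfolding reconf_seq_def
proof (intro conjI allI impI)
  have cs: "fs \<noteq> []" "\<forall>v\<in>V. hd fs v = a v" "\<forall>v\<in>V. last fs v = b v"
    "\<forall>h\<in>set fs. pq_colouring p q V E h"
    "\<And>i. Suc i < length fs \<Longrightarrow> differ_le_one V (fs ! i) (fs ! Suc i)"
    using assms(1) unfolding reconf_seq_def by auto
  show "rev fs \<noteq> []" using cs by simp
  show "\<forall>v\<in>V. hd (rev fs) v = b v" using cs by (simp add: hd_rev)
  show "\<forall>v\<in>V. last (rev fs) v = a v" using cs by (simp add: last_rev)
  show "\<forall>g\<in>set (rev fs). pq_colouring p q V E g" using cs by simp
  fix i assume i: "Suc i < length (rev fs)"
  define j where "j = length fs - Suc (Suc i)"
  have j: "Suc j < length fs" "length fs - Suc i = Suc j" using i by (auto simp: j_def)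
  have "rev fs ! i = fs ! Suc j" "rev fs ! Suc i = fs ! j" using i j by (auto simp: rev_nth j_def)
  thus "differ_le_one V (rev fs ! i) (rev fs ! Suc i)" using cs(5)[OF j(1)] differ_sym[of V "fs ! j" "fs ! Suc j"] by simp
qed

lemma rs_tail:
  assumes "reconf_seq p q V E a b (h # h2 # t)"
  shows "reconf_seq p q V E h2 b (h2 # t) \<and> pq_colouring p q V E h \<and> differ_le_one V h h2 \<and> (\<forall>v\<in>V. h v = a v)"
proof -
  have cs: "\<forall>v\<in>V. h v = a v" "\<forall>v\<in>V. last (h2 # t) v = b v"
    "\<forall>g\<in>set (h # h2 # t). pq_colouring p q V E g"
    "\<And>i. Suc i < length (h # h2 # t) \<Longrightarrow> differ_le_one V ((h # h2 # t) ! i) ((h # h2 # t) ! Suc i)"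
    using assms unfolding reconf_seq_def by auto
  have d: "differ_le_one V h h2" using cs(4)[of 0] by simp
  have "\<And>i. Suc i < length (h2 # t) \<Longrightarrow> differ_le_one V ((h2 # t) ! i) ((h2 # t) ! Suc i)"
  proof -
    fix i assume "Suc i < length (h2 # t)"
    hence "Suc (Suc i) < length (h # h2 # t)" by simp
    from cs(4)[OF this] show "differ_le_one V ((h2 # t) ! i) ((h2 # t) ! Suc i)" by simp
  qed
  hence "reconf_seq p q V E h2 b (h2 # t)" using cs unfolding reconf_seq_def by simp
  thus ?thesis using cs d by simp
qed

lemma rs_start_cong:
  assumes "reconf_seq p q V E h c xs" "\<forall>v\<in>V. h v = a v"
  shows "reconf_seq p q V E a c xs"
proof -
  have "\<forall>v\<in>V. hd xs v = a v" using assms unfolding reconf_seq_def by simp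
  thus ?thesis using assms(1) unfolding reconf_seq_def by blast
qed

lemma rs_end_cong:
  assumes "reconf_seq p q V E a c xs" "\<forall>v\<in>V. c v = c' v"
  shows "reconf_seq p q V E a c' xs"
proof -
  have "\<forall>v\<in>V. last xs v = c' v" using assms unfolding reconf_seq_def by simp
  thus ?thesis using assms(1) unfolding reconf_seq_def by blast
qed

lemma rs_app:
  assumes "reconf_seq p q V E a b fs" "reconf_seq p q V E b c gs"
  shows "reconf_seq p q V E a c (fs @ gs)"
  using assms
proof (induction fs arbitrary: a)
  case Nil thus ?case by (simp add: reconf_seq_def)
next
  case (Cons h fs)
  show ?case
  proof (cases fs)
    case Nil
    have h: "\<forall>v\<in>V. h v = a v" "\<forall>v\<in>V. h v = b v" "pq_colouring p q V E h"
      using Cons.prems(1) Nil by (auto simp: reconf_seq_def)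
    have g: "gs \<noteq> []" "\<forall>v\<in>V. hd gs v = b v" using Cons.prems(2) by (auto simp: reconf_seq_def)
    have "{v\<in>V. h v \<noteq> b v} = {}" using h by auto
    hence "differ_le_one V h b" unfolding differ_le_one_def by (metis card.empty le0)
    hence "reconf_seq p q V E h c (h # gs)" using rs_cons[OF Cons.prems(2) h(3)] by blast
    from rs_start_cong[OF this h(1)] show ?thesis using Nil by simp
  next
    case (Cons h2 t)
    have r: "reconf_seq p q V E h2 b fs"
      using rs_tail[of p q V E a b h h2 t] Cons.prems(1) \<open>fs = h2 # t\<close> by simp
    have IH: "reconf_seq p q V E h2 c (fs @ gs)" using Cons.IH[OF r Cons.prems(2)] .
    have h: "pq_colouring p q V E h" "differ_le_one V h h2" "\<forall>v\<in>V. h v = a v"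
      using rs_tail[of p q V E a b h h2 t] Cons.prems(1) \<open>fs = h2 # t\<close> by simp_all
    have "reconf_seq p q V E h c (h # fs @ gs)" using rs_cons[OF IH h(1,2)] .
    from rs_start_cong[OF this h(3)] show ?thesis by simp
  qed
qed


lemma dvd_small_zero:
  fixes d p :: int
  assumes "p > 0" "p dvd d" "\<bar>d\<bar> < p"
  shows "d = 0"
proof -
  obtain k where k: "d = p * k" using assms(2) by (auto elim: dvdE)
  have "p * k < p * 1" using k assms(3) by simp
  hence "k < 1" using assms(1) mult_less_cancel_left_pos by blast
  moreover have "p * (-1) < p * k" using k assms(3) by simp
  hence "-1 < k" using assms(1) mult_less_cancel_left_pos by blast
  ultimately show ?thesis using k by simp
qed

lemma mod_range_edge:
  fixes a b p q :: int
  assumes "0 \<le> a" "a < p" "0 \<le> b" "b < p" "q \<le> \<bar>a - b\<bar>" "\<bar>a - b\<bar> \<le> p - q" "0 < q"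
  shows "q \<le> (a - b) mod p \<and> (a - b) mod p \<le> p - q"
proof (cases "a \<ge> b")
  case True
  hence "(a - b) mod p = a - b" using assms by (intro mod_small_int) auto
  thus ?thesis using assms True by auto
next
  case False
  have "(a - b) mod p = (a - b + p) mod p" by simp
  also have "\<dots> = a - b + p" using assms False by (intro mod_small_int) auto
  finally show ?thesis using assms False by auto
qed

lemma mod_dvd_diff: "(p::int) dvd (a mod p - a)"
  by (metis dvd_minus_mod minus_diff_eq dvd_minus_iff)

lemma crossing: "(a,b) \<in> R\<^sup>* \<Longrightarrow> a \<in> A \<Longrightarrow> b \<notin> A \<Longrightarrow> \<exists>u w. (u,w) \<in> R \<and> u \<in> A \<and> w \<notin> A"
proof (induction rule: rtrancl_induct)
  case base thus ?case by simp
next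
  case (step y z)
  show ?case
  proof (cases "y \<in> A")
    case True thus ?thesis using step by blast
  next
    case False thus ?thesis using step by blast
  qed
qed

definition cyc :: "('a \<times> 'a) set \<Rightarrow> ('a \<times> 'a) set" where
  "cyc R = {(u,w). (u,w) \<in> R \<and> (w,u) \<in> R\<^sup>*}"

lemma cyc_rtrancl: "(a,b) \<in> R\<^sup>* \<Longrightarrow> (b,a) \<in> R\<^sup>* \<Longrightarrow> (a,b) \<in> (cyc R)\<^sup>*"
proof (induction rule: rtrancl_induct)
  case base thus ?case by simp
next
  case (step y z)
  have "(y,a) \<in> R\<^sup>*" using step(2,4) by (meson converse_rtrancl_into_rtrancl)
  hence "(a,y) \<in> (cyc R)\<^sup>*" using step.IH by blast
  moreover have "(z,y) \<in> R\<^sup>*" using step(1,4) by (meson rtrancl_trans)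
  hence "(y,z) \<in> cyc R" using step(2) by (simp add: cyc_def)
  ultimately show ?case by (meson rtrancl.rtrancl_into_rtrancl)
qed

lemma cyc_trancl: assumes "(z,z) \<in> R\<^sup>+" shows "(z,z) \<in> (cyc R)\<^sup>+"
proof -
  obtain a where za: "(z,a) \<in> R" and az: "(a,z) \<in> R\<^sup>*" using assms by (meson tranclD)
  have "(z,a) \<in> cyc R" using za az by (simp add: cyc_def)
  moreover have "(a,z) \<in> (cyc R)\<^sup>*" using az za by (intro cyc_rtrancl) auto
  ultimately show ?thesis by (meson rtrancl_into_trancl2)
qed

lemma cyc_vertices: assumes "(a,b) \<in> cyc R" shows "(a,a) \<in> R\<^sup>+" "(b,b) \<in> R\<^sup>+"
proof -
  have ab: "(a,b) \<in> R" and ba: "(b,a) \<in> R\<^sup>*" using assms by (auto simp: cyc_def)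
  show "(a,a) \<in> R\<^sup>+" using rtrancl_into_trancl2[OF ab ba] .
  show "(b,b) \<in> R\<^sup>+" using rtrancl_into_trancl1[OF ba ab] .
qed

lemma cyc_mono: "(z,z) \<in> (cyc R)\<^sup>+ \<Longrightarrow> cyc R \<subseteq> S \<Longrightarrow> (z,z) \<in> S\<^sup>+"
  using trancl_mono by blast

locale setting =
  fixes p q :: nat and V :: "nat set" and E :: "nat \<Rightarrow> nat \<Rightarrow> bool" and f :: "nat \<Rightarrow> nat"
  assumes q0: "0 < q" and p2: "2*q \<le> p" and p4: "p < 4*q"
    and sg: "simple_graph V E" and fcol: "pq_colouring p q V E f"
begin

lemma p0: "0 < p" using q0 p2 by simp

lemma E_V: "E a b \<Longrightarrow> a \<in> V \<and> b \<in> V" using sg unfolding simple_graph_def by blast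
lemma E_sym: "E a b \<Longrightarrow> E b a" using sg unfolding simple_graph_def by blast
lemma E_irr: "E a b \<Longrightarrow> a \<noteq> b" using sg unfolding simple_graph_def by blast
lemma finV: "finite V" using sg unfolding simple_graph_def by blast

definition D :: "nat \<Rightarrow> nat \<Rightarrow> int" where
  "D a b = (int (f b) - int (f a)) mod int p"

lemma D_range: "0 \<le> D a b" "D a b < int p"
  using p0 by (auto simp: D_def)

lemma f_edge: "E a b \<Longrightarrow> int q \<le> \<bar>int (f a) - int (f b)\<bar> \<and> \<bar>int (f a) - int (f b)\<bar> \<le> int p - int q"
  using fcol E_V unfolding pq_colouring_def by blast

lemma f_lt: "v \<in> V \<Longrightarrow> f v < p" using fcol unfolding pq_colouring_def by blast

lemma D_edge_val: assumes "E a b"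
  shows "D a b = (if int (f b) \<ge> int (f a) then int (f b) - int (f a) else int (f b) - int (f a) + int p)"
proof -
  have fa: "f a < p" "f b < p" using f_lt E_V assms by auto
  show ?thesis
  proof (cases "int (f b) \<ge> int (f a)")
    case True thus ?thesis using fa by (simp add: D_def)
  next
    case False
    have "(int (f b) - int (f a)) mod int p = (int (f b) - int (f a) + int p) mod int p" by simp
    also have "\<dots> = int (f b) - int (f a) + int p" using False fa by (intro mod_small_int) auto
    finally show ?thesis using False by (simp add: D_def)
  qed
qed

lemma D_sym: "E a b \<Longrightarrow> D a b + D b a = int p"
  using D_edge_val[of a b] D_edge_val[of b a] f_edge[of a b] q0 E_sym[of a b]
  by (auto split: if_splits)

lemma D_edge_range: "E a b \<Longrightarrow> int q \<le> D a b \<and> D a b \<le> int p - int q"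
  using D_edge_val[of a b] f_edge[of a b] by (auto split: if_splits)


definition inF :: "(nat \<Rightarrow> int) \<Rightarrow> bool" where
  "inF x \<longleftrightarrow> (\<forall>a b. E a b \<longrightarrow> int q \<le> D a b + x b - x a \<and> D a b + x b - x a \<le> int p - int q)"

definition T :: "(nat \<Rightarrow> int) \<Rightarrow> (nat \<times> nat) set" where
  "T x = {(a,b). E a b \<and> D a b + x b - x a = int q}"

definition col :: "(nat \<Rightarrow> int) \<Rightarrow> nat \<Rightarrow> nat" where
  "col x v = nat ((int (f v) + x v) mod int p)"

lemma inF_sym:
  assumes "E a b"
  shows "(int q \<le> D a b + x b - x a \<and> D a b + x b - x a \<le> int p - int q)
     \<longleftrightarrow> (int q \<le> D b a + x a - x b \<and> D b a + x a - x b \<le> int p - int q)"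
  using D_sym[OF assms] by auto

lemma inF_E: "inF x \<Longrightarrow> E a b \<Longrightarrow> int q \<le> D a b + x b - x a \<and> D a b + x b - x a \<le> int p - int q"
  unfolding inF_def by blast

lemma inF_I:
  assumes "\<And>a b. E a b \<Longrightarrow> int q \<le> D a b + x b - x a" 
  shows "inF x"
  unfolding inF_def
proof (intro allI impI)
  fix a b assume ab: "E a b"
  have 1: "int q \<le> D a b + x b - x a" using assms ab by blast
  have 2: "int q \<le> D b a + x a - x b" using assms E_sym[OF ab] by blast
  show "int q \<le> D a b + x b - x a \<and> D a b + x b - x a \<le> int p - int q"
    using 1 2 D_sym[OF ab] by linarith
qed

lemma zero_inF: "inF (\<lambda>_. 0)"
  using D_edge_range unfolding inF_def by auto

lemma shift_inF: "inF x \<Longrightarrow> inF (\<lambda>v. x v + c)"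
  unfolding inF_def by (simp add: algebra_simps)

lemma shift_T: "T (\<lambda>v. x v + c) = T x"
  unfolding T_def by auto

lemma min_inF: assumes "inF x" "inF y" shows "inF (\<lambda>v. min (x v) (y v))"
proof (rule inF_I)
  fix a b assume ab: "E a b"
  have "int q \<le> D a b + x b - x a" "int q \<le> D a b + y b - y a"
    "D a b + x b - x a \<le> int p - int q" "D a b + y b - y a \<le> int p - int q"
    using inF_E[OF assms(1) ab] inF_E[OF assms(2) ab] by auto
  thus "int q \<le> D a b + min (x b) (y b) - min (x a) (y a)" by (auto simp: min_def)
qed

lemma edge_diff: "inF x \<Longrightarrow> E a b \<Longrightarrow> \<bar>x b - x a\<bar> \<le> int p"
  using inF_E[of x a b] D_range[of a b] by auto

lemma col_lt: "col x v < p"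
  using p0 by (simp add: col_def nat_less_iff)

lemma col_int: "int (col x v) = (int (f v) + x v) mod int p"
  using p0 by (simp add: col_def)

lemma col_colouring: assumes "inF x" shows "pq_colouring p q V E (col x)"
  unfolding pq_colouring_def
proof (rule conjI; intro ballI impI)
  fix v show "col x v < p" by (rule col_lt)
next
  fix a b assume "a \<in> V" "b \<in> V" and ab: "E a b"
  define A where "A = (int (f a) + x a) mod int p"
  define B where "B = (int (f b) + x b) mod int p"
  define t where "t = D a b + x b - x a"
  have t: "int q \<le> t" "t \<le> int p - int q" using inF_E[OF assms ab] t_def by auto
  have AB: "0 \<le> A" "A < int p" "0 \<le> B" "B < int p" using p0 by (auto simp: A_def B_def)
  have e1: "(B - A) mod int p = ((int (f b) + x b) - (int (f a) + x a)) mod int p"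
    unfolding A_def B_def by (simp add: mod_diff_eq)
  have e2: "t mod int p = ((int (f b) - int (f a)) + (x b - x a)) mod int p"
    unfolding t_def D_def by (metis mod_add_left_eq add_diff_eq)
  have "(B - A) mod int p = t mod int p" using e1 e2 by (simp add: algebra_simps)
  also have "\<dots> = t" using t q0 by (intro mod_small_int) auto
  finally have m: "(B - A) mod int p = t" .
  have "B - A = t \<or> B - A = t - int p"
  proof (cases "B - A \<ge> 0")
    case True thus ?thesis using m AB by (simp add: mod_small_int)
  next
    case False
    have "(B - A + int p) mod int p = t" using m by simp
    moreover have "(B - A + int p) mod int p = B - A + int p" using False AB by (intro mod_small_int) auto
    ultimately show ?thesis by simp
  qed
  hence "\<bar>B - A\<bar> = t \<or> \<bar>B - A\<bar> = int p - t" using t q0 by auto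
  moreover have "int (col x a) = A" "int (col x b) = B" by (simp_all add: col_int A_def B_def)
  ultimately show "int q \<le> \<bar>int (col x a) - int (col x b)\<bar> \<and> \<bar>int (col x a) - int (col x b)\<bar> \<le> int p - int q"
    using t by auto
qed

lemma col_zero: "v \<in> V \<Longrightarrow> col (\<lambda>_. 0) v = f v"
  using f_lt by (simp add: col_def)

lemma col_shift: "col (\<lambda>v. x v + int p * c) = col x"
  unfolding col_def by (rule ext) (simp add: add.assoc[symmetric])


lemma frozen:
  assumes x: "inF x" and x': "inF x'" and off: "\<And>w. w \<noteq> v \<Longrightarrow> x' w = x w"
    and c: "(v,v) \<in> (T x)\<^sup>+"
  shows "x' v = x v"
proof -
  obtain a where va: "(v,a) \<in> T x" using tranclD[OF c] by blast
  obtain b where bv: "(b,v) \<in> T x" using tranclD2[OF c] by blast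
  have Eva: "E v a" and eqa: "D v a + x a - x v = int q" using va by (auto simp: T_def)
  have Ebv: "E b v" and eqb: "D b v + x v - x b = int q" using bv by (auto simp: T_def)
  have "a \<noteq> v" "b \<noteq> v" using E_irr Eva Ebv by auto
  hence "x' a = x a" "x' b = x b" using off by auto
  moreover have "int q \<le> D v a + x' a - x' v" "int q \<le> D b v + x' v - x' b"
    using inF_E[OF x' Eva] inF_E[OF x' Ebv] by auto
  ultimately show ?thesis using eqa eqb by linarith
qed

lemma transfer:
  assumes x: "inF x" and x': "inF x'" and off: "\<And>w. w \<noteq> v \<Longrightarrow> x' w = x w"
    and c: "(z,z) \<in> (T x)\<^sup>+"
  shows "(z,z) \<in> (T x')\<^sup>+ \<and> x' z = x z"
proof -
  have fr: "x' u = x u" if "(u,u) \<in> (T x)\<^sup>+" for u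
  proof (cases "u = v")
    case True thus ?thesis using frozen[OF x x' off] that by simp
  next
    case False thus ?thesis using off by simp
  qed
  have "cyc (T x) \<subseteq> T x'"
  proof
    fix e assume e: "e \<in> cyc (T x)"
    obtain a b where ab: "e = (a,b)" by (cases e)
    have eab: "(a,b) \<in> cyc (T x)" using e ab by simp
    have "x' a = x a" using fr[OF cyc_vertices(1)[OF eab]] .
    moreover have "x' b = x b" using fr[OF cyc_vertices(2)[OF eab]] .
    moreover have "(a,b) \<in> T x" using e ab by (simp add: cyc_def)
    ultimately show "e \<in> T x'" using ab by (simp add: T_def)
  qed
  hence "(z,z) \<in> (T x')\<^sup>+" using cyc_mono[OF cyc_trancl[OF c]] by blast
  thus ?thesis using fr[OF c] by simp
qed


lemma differ_one:
  assumes "\<And>w. w \<in> V \<Longrightarrow> w \<noteq> v \<Longrightarrow> g w = h w"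
  shows "differ_le_one V g h"
proof -
  have "{w\<in>V. g w \<noteq> h w} \<subseteq> {v}" using assms by auto
  hence "card {w\<in>V. g w \<noteq> h w} \<le> card {v}" by (intro card_mono) auto
  thus ?thesis unfolding differ_le_one_def by simp
qed

lemma descent:
  assumes m: "inF m"
  shows "\<forall>x. inF x \<longrightarrow> (\<forall>v\<in>V. m v \<le> x v) \<longrightarrow> (\<forall>z\<in>V. (z,z) \<in> (T x)\<^sup>+ \<longrightarrow> x z = m z)
     \<longrightarrow> (\<Sum>v\<in>V. nat (x v - m v)) = k
     \<longrightarrow> (\<exists>cs. reconf_seq p q V E (col x) (col m) cs \<and> length cs \<le> k + 1)"
proof (induction k)
  case 0
  show ?case
  proof (intro allI impI)
    fix x assume x: "inF x" and le: "\<forall>v\<in>V. m v \<le> x v"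
      and "\<forall>z\<in>V. (z,z) \<in> (T x)\<^sup>+ \<longrightarrow> x z = m z" and "(\<Sum>v\<in>V. nat (x v - m v)) = 0"
    hence "\<forall>v\<in>V. nat (x v - m v) = 0" using finV by simp
    hence z: "\<forall>v\<in>V. nat (x v - m v) = 0" .
    have "\<forall>v\<in>V. col x v = col m v"
    proof
      fix v assume v: "v \<in> V"
      have "nat (x v - m v) = 0" "m v \<le> x v" using z le v by auto
      hence "x v = m v" by simp
      thus "col x v = col m v" by (simp add: col_def)
    qed
    hence "reconf_seq p q V E (col x) (col m) [col x]" by (rule rs_single[OF col_colouring[OF x]])
    thus "\<exists>cs. reconf_seq p q V E (col x) (col m) cs \<and> length cs \<le> 0 + 1" by (intro exI[of _ "[col x]"]) simp
  qed
next
  case (Suc k)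
  show ?case
  proof (intro allI impI)
    fix x assume x: "inF x" and le: "\<forall>v\<in>V. m v \<le> x v"
      and cy: "\<forall>z\<in>V. (z,z) \<in> (T x)\<^sup>+ \<longrightarrow> x z = m z"
      and sm: "(\<Sum>v\<in>V. nat (x v - m v)) = Suc k"
    obtain v0 where v0: "v0 \<in> V" "x v0 > m v0"
    proof -
      have "\<exists>v\<in>V. nat (x v - m v) \<noteq> 0"
      proof (rule ccontr)
        assume "\<not> (\<exists>v\<in>V. nat (x v - m v) \<noteq> 0)"
        hence "(\<Sum>v\<in>V. nat (x v - m v)) = 0" by simp
        thus False using sm by simp
      qed
      then obtain v where "v \<in> V" "nat (x v - m v) \<noteq> 0" by blast
      thus ?thesis using that by simp
    qed
    define g where "g = (\<lambda>v. x v - m v)"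
    define ds where "ds = Max (g ` V)"
    have gle: "\<And>v. v \<in> V \<Longrightarrow> g v \<le> ds" unfolding ds_def using finV by simp
    have ds0: "ds > 0" using gle[OF v0(1)] v0 by (simp add: g_def)
    have dsin: "ds \<in> g ` V" unfolding ds_def using finV v0(1) by (intro Max_in) auto
    define S where "S = {v\<in>V. g v = ds}"
    have Sne: "S \<noteq> {}" using dsin S_def by auto
    define R where "R = {(a,b). a \<in> S \<and> b \<in> S \<and> (a,b) \<in> T x}"
    have finS: "finite S" using finV S_def by simp
    have "R \<subseteq> S \<times> S" unfolding R_def by auto
    hence finR: "finite R" using finS finite_subset by blast
    have "acyclic R"
    proof (rule acyclicI, intro allI notI)
      fix z assume zz: "(z,z) \<in> R\<^sup>+"
      have "R \<subseteq> T x" unfolding R_def by auto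
      hence "(z,z) \<in> (T x)\<^sup>+" using zz trancl_mono by blast
      moreover obtain a where "(z,a) \<in> R" using tranclD[OF zz] by blast
      hence "z \<in> S" unfolding R_def by auto
      ultimately have "x z = m z" "g z = ds" using cy S_def by auto
      thus False using ds0 g_def by simp
    qed
    hence wfR: "wf R" using finR finite_acyclic_wf by blast
    obtain v where vS: "v \<in> S" and vmin: "\<And>a. (a,v) \<in> R \<Longrightarrow> a \<notin> S"
      using wfE_min[OF wfR, of _ S] Sne by blast
    have vV: "v \<in> V" and gv: "g v = ds" using vS S_def by auto
    have notT: "\<And>a. a \<in> S \<Longrightarrow> (a,v) \<notin> T x" using vmin vS R_def by blast
    define x' where "x' = x(v := x v - 1)"
    have x': "inF x'"
    proof (rule inF_I)
      fix a b assume ab: "E a b"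
      have abV: "a \<in> V" "b \<in> V" using E_V[OF ab] by auto
      have neq: "a \<noteq> b" using E_irr[OF ab] .
      have xab: "int q \<le> D a b + x b - x a" using inF_E[OF x ab] by simp
      show "int q \<le> D a b + x' b - x' a"
      proof (cases "b = v")
        case True
        hence av: "a \<noteq> v" using neq by simp
        have "int q + 1 \<le> D a b + x b - x a"
        proof (cases "a \<in> S")
          case True
          hence "(a,b) \<notin> T x" using notT \<open>b = v\<close> by simp
          thus ?thesis using xab ab by (simp add: T_def)
        next
          case False
          hence "g a < ds" using gle[OF abV(1)] abV(1) S_def by force
          moreover have "int q \<le> D a b + m b - m a" using inF_E[OF m ab] by simp
          ultimately show ?thesis using gv \<open>b = v\<close> g_def by simp
        qed
        thus ?thesis using True av by (simp add: x'_def)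
      next
        case False
        thus ?thesis using xab by (auto simp: x'_def)
      qed
    qed
    have le': "\<forall>w\<in>V. m w \<le> x' w" using le gv ds0 g_def by (auto simp: x'_def)
    have off: "\<And>w. w \<noteq> v \<Longrightarrow> x w = x' w" by (simp add: x'_def)
    have cy': "\<forall>z\<in>V. (z,z) \<in> (T x')\<^sup>+ \<longrightarrow> x' z = m z"
    proof (intro ballI impI)
      fix z assume "z \<in> V" "(z,z) \<in> (T x')\<^sup>+"
      from transfer[OF x' x off this(2)] have "(z,z) \<in> (T x)\<^sup>+" "x z = x' z" by auto
      thus "x' z = m z" using cy \<open>z \<in> V\<close> by simp
    qed
    have "(\<Sum>w\<in>V. nat (x w - m w)) = nat (x v - m v) + (\<Sum>w\<in>V-{v}. nat (x w - m w))"
      using finV vV by (simp add: sum.remove)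
    moreover have "(\<Sum>w\<in>V. nat (x' w - m w)) = nat (x' v - m v) + (\<Sum>w\<in>V-{v}. nat (x' w - m w))"
      using finV vV by (simp add: sum.remove)
    moreover have "(\<Sum>w\<in>V-{v}. nat (x' w - m w)) = (\<Sum>w\<in>V-{v}. nat (x w - m w))"
      by (rule sum.cong) (auto simp: x'_def)
    moreover have "nat (x' v - m v) + 1 = nat (x v - m v)" using gv ds0 g_def by (simp add: x'_def)
    ultimately have sm': "(\<Sum>w\<in>V. nat (x' w - m w)) = k" using sm by simp
    obtain cs where cs: "reconf_seq p q V E (col x') (col m) cs" "length cs \<le> k + 1"
      using Suc.IH x' le' cy' sm' by blast
    have "differ_le_one V (col x) (col x')"
      by (rule differ_one[of v]) (simp add: x'_def col_def)
    hence "reconf_seq p q V E (col x) (col m) (col x # cs)"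
      using rs_cons[OF cs(1) col_colouring[OF x]] by blast
    thus "\<exists>cs. reconf_seq p q V E (col x) (col m) cs \<and> length cs \<le> Suc k + 1"
      using cs(2) by (intro exI[of _ "col x # cs"]) simp
  qed
qed


lemma lift_step:
  assumes x: "inF x" and hx: "\<forall>v\<in>V. col x v = h v" and h': "pq_colouring p q V E h'"
    and hc: "pq_colouring p q V E h" and dif: "differ_le_one V h h'"
  shows "\<exists>x' v. inF x' \<and> (\<forall>w\<in>V. col x' w = h' w) \<and> (\<forall>w. w \<noteq> v \<longrightarrow> x' w = x w)"
proof (cases "{w\<in>V. h w \<noteq> h' w} = {}")
  case True
  hence "\<forall>w\<in>V. col x w = h' w" using hx by auto
  thus ?thesis using x by blast
next
  case False
  then obtain v where v: "v \<in> V" "h v \<noteq> h' v" by blast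
  have fin: "finite {w\<in>V. h w \<noteq> h' w}" using finV by simp
  have same: "\<And>w. w \<in> V \<Longrightarrow> w \<noteq> v \<Longrightarrow> h w = h' w"
  proof (rule ccontr)
    fix w assume w: "w \<in> V" "w \<noteq> v" "h w \<noteq> h' w"
    have "{v, w} \<subseteq> {w\<in>V. h w \<noteq> h' w}" using v w by auto
    hence "card {v, w} \<le> card {w\<in>V. h w \<noteq> h' w}" using fin by (intro card_mono)
    thus False using dif w(2) unfolding differ_le_one_def by simp
  qed
  define r where "r = (int (h' v) - int (h v)) mod int p"
  define s where "s = (if 2 * r \<le> int p then r else r - int p)"
  have r: "0 \<le> r" "r < int p" using p0 by (auto simp: r_def)
  have s2: "2 * \<bar>s\<bar> \<le> int p" using r by (auto simp: s_def)
  have sd: "int p dvd (s - (int (h' v) - int (h v)))"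
  proof -
    have "int p dvd (r - (int (h' v) - int (h v)))" unfolding r_def by (rule mod_dvd_diff)
    thus ?thesis unfolding s_def by (auto simp: algebra_simps dvd_diff)
  qed
  have hxi: "\<And>w. w \<in> V \<Longrightarrow> int p dvd (int (h w) - (int (f w) + x w))"
  proof -
    fix w assume "w \<in> V"
    hence "int (h w) = (int (f w) + x w) mod int p" using hx col_int by metis
    thus "int p dvd (int (h w) - (int (f w) + x w))" using mod_dvd_diff by simp
  qed
  define x' where "x' = x(v := x v + s)"
  have key: "\<And>a. E a v \<Longrightarrow> D a v + x' v - x' a = (int (h' v) - int (h' a)) mod int p"
  proof -
    fix a assume av: "E a v"
    have aV: "a \<in> V" and an: "a \<noteq> v" using E_V[OF av] E_irr[OF av] by auto
    define t0 where "t0 = D a v + x v - x a"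
    define t1 where "t1 = (int (h' v) - int (h' a)) mod int p"
    have t0: "int q \<le> t0" "t0 \<le> int p - int q" using inF_E[OF x av] t0_def by auto
    have h'e: "int q \<le> \<bar>int (h' a) - int (h' v)\<bar> \<and> \<bar>int (h' a) - int (h' v)\<bar> \<le> int p - int q"
      using h' aV v(1) av unfolding pq_colouring_def by blast
    have h'lt: "h' a < p" "h' v < p" using h' aV v(1) unfolding pq_colouring_def by auto
    have t1: "int q \<le> t1" "t1 \<le> int p - int q"
      using mod_range_edge[of "int (h' v)" "int p" "int (h' a)" "int q"] h'e h'lt q0
      unfolding t1_def by (auto simp: abs_minus_commute)
    have d1: "int p dvd (D a v - (int (f v) - int (f a)))" unfolding D_def by (rule mod_dvd_diff)
    have d2: "int p dvd (t1 - (int (h' v) - int (h' a)))" unfolding t1_def by (rule mod_dvd_diff)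
    have ha: "h a = h' a" using same[OF aV an] .
    have "t0 + s - t1 = (D a v - (int (f v) - int (f a))) - (int (h v) - (int (f v) + x v))
        + (int (h a) - (int (f a) + x a)) + (s - (int (h' v) - int (h v))) - (t1 - (int (h' v) - int (h' a)))"
      unfolding t0_def using ha by (simp add: algebra_simps)
    hence "int p dvd (t0 + s - t1)" using d1 d2 sd hxi[OF aV] hxi[OF v(1)]
      by (metis dvd_add dvd_diff)
    moreover have "\<bar>t0 + s - t1\<bar> < int p" using t0 t1 s2 p4 by linarith
    ultimately have "t0 + s - t1 = 0" using dvd_small_zero[of "int p" "t0 + s - t1"] p0 by simp
    thus "D a v + x' v - x' a = (int (h' v) - int (h' a)) mod int p"
      using an unfolding x'_def t0_def t1_def by simp
  qed
  have x'F: "inF x'"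
  proof (rule inF_I)
    fix a b assume ab: "E a b"
    have an: "a \<noteq> b" using E_irr[OF ab] .
    have abV: "a \<in> V" "b \<in> V" using E_V[OF ab] by auto
    show "int q \<le> D a b + x' b - x' a"
    proof (cases "b = v")
      case True
      have hh: "h' a < p" "h' b < p" using h' abV unfolding pq_colouring_def by auto
      have "int q \<le> \<bar>int (h' b) - int (h' a)\<bar> \<and> \<bar>int (h' b) - int (h' a)\<bar> \<le> int p - int q"
        using h' abV ab E_sym[OF ab] unfolding pq_colouring_def by blast
      hence "int q \<le> (int (h' b) - int (h' a)) mod int p"
        using mod_range_edge[of "int (h' b)" "int p" "int (h' a)" "int q"] hh q0 by auto
      thus ?thesis using key[of a] ab True by simp
    next
      case False
      show ?thesis
      proof (cases "a = v")
        case True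
        have Eb: "E b a" using E_sym[OF ab] .
        have hh: "h' a < p" "h' b < p" using h' abV unfolding pq_colouring_def by auto
        have "int q \<le> \<bar>int (h' a) - int (h' b)\<bar> \<and> \<bar>int (h' a) - int (h' b)\<bar> \<le> int p - int q"
          using h' abV ab unfolding pq_colouring_def by blast
        hence "(int (h' a) - int (h' b)) mod int p \<le> int p - int q"
          using mod_range_edge[of "int (h' a)" "int p" "int (h' b)" "int q"] hh q0 by auto
        hence "D b a + x' a - x' b \<le> int p - int q" using key[of b] Eb True by simp
        thus ?thesis using D_sym[OF ab] by simp
      next
        case False
        thus ?thesis using inF_E[OF x ab] \<open>b \<noteq> v\<close> by (simp add: x'_def)
      qed
    qed
  qed
  have colv: "col x' v = h' v"
  proof -
    have "int p dvd ((int (f v) + x' v) - int (h' v))"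
    proof -
      have "(int (f v) + x' v) - int (h' v) = (s - (int (h' v) - int (h v))) - (int (h v) - (int (f v) + x v))"
        by (simp add: x'_def algebra_simps)
      thus ?thesis using sd hxi[OF v(1)] by (metis dvd_diff)
    qed
    hence "(int (f v) + x' v) mod int p = int (h' v) mod int p"
      by (metis mod_eq_dvd_iff)
    moreover have "int (h' v) mod int p = int (h' v)" using h' v(1) unfolding pq_colouring_def by simp
    ultimately show ?thesis by (simp add: col_def)
  qed
  have "\<forall>w\<in>V. col x' w = h' w"
  proof
    fix w assume w: "w \<in> V"
    show "col x' w = h' w"
    proof (cases "w = v")
      case True thus ?thesis using colv by simp
    next
      case False thus ?thesis using hx w same[OF w False] by (simp add: x'_def col_def)
    qed
  qed
  moreover have "\<forall>w. w \<noteq> v \<longrightarrow> x' w = x w" by (simp add: x'_def)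
  ultimately show ?thesis using x'F by blast
qed


lemma lift_seq:
  "\<forall>a x. reconf_seq p q V E a b fs \<longrightarrow> inF x \<longrightarrow> (\<forall>v\<in>V. col x v = a v) \<longrightarrow>
     (\<exists>x'. inF x' \<and> (\<forall>v\<in>V. col x' v = b v) \<and> (\<forall>z. (z,z) \<in> (T x)\<^sup>+ \<longleftrightarrow> (z,z) \<in> (T x')\<^sup>+)
        \<and> (\<forall>z. (z,z) \<in> (T x)\<^sup>+ \<longrightarrow> x' z = x z))"
proof (induction fs)
  case Nil thus ?case by (simp add: reconf_seq_def)
next
  case (Cons h fs)
  show ?case
  proof (intro allI impI)
    fix a x assume rs: "reconf_seq p q V E a b (h # fs)" and x: "inF x" and xa: "\<forall>v\<in>V. col x v = a v"
    show "\<exists>x'. inF x' \<and> (\<forall>v\<in>V. col x' v = b v) \<and> (\<forall>z. (z,z) \<in> (T x)\<^sup>+ \<longleftrightarrow> (z,z) \<in> (T x')\<^sup>+)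
        \<and> (\<forall>z. (z,z) \<in> (T x)\<^sup>+ \<longrightarrow> x' z = x z)"
    proof (cases fs)
      case Nil
      have "\<forall>v\<in>V. h v = a v" "\<forall>v\<in>V. h v = b v" using rs Nil by (auto simp: reconf_seq_def)
      hence "\<forall>v\<in>V. col x v = b v" using xa by simp
      thus ?thesis using x by blast
    next
      case (Cons h2 t)
      have tl: "reconf_seq p q V E h2 b (h2 # t)" "pq_colouring p q V E h" "differ_le_one V h h2"
        "\<forall>v\<in>V. h v = a v"
        using rs_tail[of p q V E a b h h2 t] rs Cons by simp_all
      have h2c: "pq_colouring p q V E h2" using tl(1) unfolding reconf_seq_def by simp
      have xh: "\<forall>v\<in>V. col x v = h v" using xa tl(4) by simp
      obtain x1 v where x1: "inF x1" "\<forall>w\<in>V. col x1 w = h2 w" "\<forall>w. w \<noteq> v \<longrightarrow> x1 w = x w"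
        using lift_step[OF x xh h2c tl(2,3)] by blast
      have off1: "\<And>w. w \<noteq> v \<Longrightarrow> x1 w = x w" using x1(3) by simp
      have off2: "\<And>w. w \<noteq> v \<Longrightarrow> x w = x1 w" using x1(3) by simp
      obtain x' where x': "inF x'" "\<forall>v\<in>V. col x' v = b v"
        "\<forall>z. (z,z) \<in> (T x1)\<^sup>+ \<longleftrightarrow> (z,z) \<in> (T x')\<^sup>+" "\<forall>z. (z,z) \<in> (T x1)\<^sup>+ \<longrightarrow> x' z = x1 z"
        using Cons.IH tl(1) x1(1,2) Cons by blast
      have e1: "\<forall>z. (z,z) \<in> (T x)\<^sup>+ \<longleftrightarrow> (z,z) \<in> (T x1)\<^sup>+"
        using transfer[OF x x1(1) off1] transfer[OF x1(1) x off2] by blast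
      have e2: "\<forall>z. (z,z) \<in> (T x)\<^sup>+ \<longrightarrow> x1 z = x z"
        using transfer[OF x x1(1) off1] by blast
      show ?thesis using x' e1 e2 by (intro exI[of _ x']) auto
    qed
  qed
qed

lemma spread:
  assumes x: "inF x" and conn: "graph_connected V E" and r: "r \<in> V"
  shows "\<forall>v\<in>V. \<bar>x v - x r\<bar> \<le> int (p * card V)"
proof -
  define B where "B k = {v\<in>V. \<bar>x v - x r\<bar> \<le> int (k * p)}" for k
  have BV: "B k \<subseteq> V" for k unfolding B_def by auto
  have fB: "finite (B k)" for k using finite_subset[OF BV finV] .
  have claim: "B k = V \<or> k + 1 \<le> card (B k)" for k
  proof (induction k)
    case 0
    have "r \<in> B 0" using r unfolding B_def by simp
    hence "1 \<le> card (B 0)" using fB[of 0] by (metis One_nat_def Suc_leI card_gt_0_iff empty_iff)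
    thus ?case by simp
  next
    case (Suc k)
    have sub: "B k \<subseteq> B (Suc k)" unfolding B_def by auto
    show ?case
    proof (cases "B k = V")
      case True thus ?thesis using sub BV[of "Suc k"] by auto
    next
      case False
      then obtain w where w: "w \<in> V" "w \<notin> B k" using BV by blast
      have "(r, w) \<in> {(a, b). E a b}\<^sup>*" using conn r w(1) unfolding graph_connected_def by blast
      moreover have "r \<in> B k" using r unfolding B_def by simp
      ultimately obtain a b where ab: "E a b" "a \<in> B k" "b \<notin> B k"
        using crossing[of r w "{(a, b). E a b}" "B k"] w(2) by auto
      have "b \<in> B (Suc k)"
      proof -
        have "\<bar>x b - x a\<bar> \<le> int p" using edge_diff[OF x ab(1)] .
        moreover have "\<bar>x a - x r\<bar> \<le> int (k * p)" using ab(2) unfolding B_def by simp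
        ultimately have "\<bar>x b - x r\<bar> \<le> int (Suc k * p)" by simp
        thus ?thesis using E_V[OF ab(1)] unfolding B_def by simp
      qed
      hence "B k \<subset> B (Suc k)" using sub ab(3) by blast
      hence "card (B k) < card (B (Suc k))" using fB by (intro psubset_card_mono) auto
      thus ?thesis using Suc.IH False by simp
    qed
  qed
  have "B (card V) = V"
  proof (rule ccontr)
    assume "B (card V) \<noteq> V"
    hence "card V + 1 \<le> card (B (card V))" using claim by blast
    moreover have "card (B (card V)) \<le> card V" using BV finV by (intro card_mono)
    ultimately show False by simp
  qed
  thus ?thesis unfolding B_def by (auto simp: mult.commute)
qed


end

theorem corollary2p11:
  fixes p q :: nat
  assumes "0 < q" and "2 * q \<le> p" and "p < 4 * q"
  shows "\<exists>C :: nat. \<forall>(V :: nat set) E f g.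
           simple_graph V E \<longrightarrow> graph_connected V E \<longrightarrow>
           pq_colouring p q V E f \<longrightarrow> pq_colouring p q V E g \<longrightarrow>
           reconfigures p q V E f g \<longrightarrow>
           (\<exists>fs. reconf_seq p q V E f g fs \<and> length fs - 1 \<le> C * (card V)\<^sup>2)"
proof (intro exI[of _ "3 * p"] allI impI)
  fix V :: "nat set" and E f g
  assume sg: "simple_graph V E" and conn: "graph_connected V E"
    and fc: "pq_colouring p q V E f" and gc: "pq_colouring p q V E g"
    and rc: "reconfigures p q V E f g"
  show "\<exists>fs. reconf_seq p q V E f g fs \<and> length fs - 1 \<le> 3 * p * (card V)\<^sup>2"
  proof (cases "V = {}")
    case True
    have "reconf_seq p q V E f g [f]" using fc True by (simp add: reconf_seq_def)
    thus ?thesis by (intro exI[of _ "[f]"]) simp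
  next
    case False
    interpret S: setting p q V E f using assms sg fc by unfold_locales
    let ?Z = "\<lambda>z. (z,z) \<in> (S.T (\<lambda>_. 0))\<^sup>+"
    obtain fs0 where fs0: "reconf_seq p q V E f g fs0" using rc unfolding reconfigures_def by blast
    have c0: "\<forall>v\<in>V. S.col (\<lambda>_. 0) v = f v" using S.col_zero by simp
    obtain xN where xN: "S.inF xN" "\<forall>v\<in>V. S.col xN v = g v"
      "\<forall>z. ?Z z \<longleftrightarrow> (z,z) \<in> (S.T xN)\<^sup>+" "\<forall>z. ?Z z \<longrightarrow> xN z = 0"
      using mp[OF mp[OF mp[OF spec[OF spec[OF S.lift_seq[of g fs0], of f], of "\<lambda>_. 0"] fs0] S.zero_inF] c0]
      by blast
    obtain r where r: "r \<in> V" "(\<exists>z. ?Z z) \<longrightarrow> ?Z r"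
    proof (cases "\<exists>z. ?Z z")
      case True
      then obtain z where z: "?Z z" by blast
      obtain a where "(z,a) \<in> S.T (\<lambda>_. 0)" using tranclD[OF z] by blast
      hence "z \<in> V" using S.E_V unfolding S.T_def by auto
      thus ?thesis using that z by blast
    next
      case False
      then show ?thesis using that \<open>V \<noteq> {}\<close> by blast
    qed
    define c where "c = xN r div int p"
    define d where "d = (\<lambda>v. xN v + int p * (- c))"
    have dF: "S.inF d" unfolding d_def by (rule S.shift_inF[OF xN(1)])
    have dT: "S.T d = S.T xN" unfolding d_def by (rule S.shift_T)
    have dcol: "S.col d = S.col xN" unfolding d_def by (rule S.col_shift)
    have dr: "d r = xN r mod int p"
      using div_mult_mod_eq[of "xN r" "int p"] unfolding d_def c_def by (simp add: algebra_simps)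
    have dZ: "\<forall>z. ?Z z \<longrightarrow> d z = 0"
    proof (intro allI impI)
      fix z assume z: "?Z z"
      hence "?Z r" using r by blast
      hence "xN r = 0" using xN(4) by blast
      hence "c = 0" unfolding c_def by simp
      thus "d z = 0" using xN(4) z unfolding d_def by simp
    qed
    define m where "m = (\<lambda>v. min ((\<lambda>_. 0::int) v) (d v))"
    have mF: "S.inF m" unfolding m_def by (rule S.min_inF[OF S.zero_inF dF])
    define k1 where "k1 = (\<Sum>v\<in>V. nat ((\<lambda>_. 0::int) v - m v))"
    define k2 where "k2 = (\<Sum>v\<in>V. nat (d v - m v))"
    obtain cs1 where cs1: "reconf_seq p q V E (S.col (\<lambda>_. 0)) (S.col m) cs1" "length cs1 \<le> k1 + 1"
    proof -
      have "\<forall>v\<in>V. m v \<le> (\<lambda>_. 0::int) v" unfolding m_def by simp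
      moreover have "\<forall>z\<in>V. (z,z) \<in> (S.T (\<lambda>_. 0))\<^sup>+ \<longrightarrow> (\<lambda>_. 0::int) z = m z"
        using dZ unfolding m_def by simp
      ultimately show ?thesis using S.descent[OF mF, of k1] S.zero_inF k1_def that by blast
    qed
    obtain cs2 where cs2: "reconf_seq p q V E (S.col d) (S.col m) cs2" "length cs2 \<le> k2 + 1"
    proof -
      have "\<forall>v\<in>V. m v \<le> d v" unfolding m_def by simp
      moreover have "\<forall>z\<in>V. (z,z) \<in> (S.T d)\<^sup>+ \<longrightarrow> d z = m z"
        using dZ xN(3) dT unfolding m_def by simp
      ultimately show ?thesis using S.descent[OF mF, of k2] dF k2_def that by blast
    qed
    have rs: "reconf_seq p q V E (S.col (\<lambda>_. 0)) (S.col d) (cs1 @ rev cs2)"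
      by (rule rs_app[OF cs1(1) rs_rev[OF cs2(1)]])
    have rs2: "reconf_seq p q V E f g (cs1 @ rev cs2)"
    proof -
      have "\<forall>v\<in>V. S.col d v = g v" using dcol xN(2) by simp
      from rs_end_cong[OF rs_start_cong[OF rs c0] this] show ?thesis .
    qed
    define n where "n = card V"
    have n1: "1 \<le> n" using False S.finV unfolding n_def by (simp add: Suc_le_eq card_gt_0_iff)
    have sp: "\<forall>v\<in>V. \<bar>d v - d r\<bar> \<le> int (p * n)" using S.spread[OF dF conn r(1)] n_def by simp
    have dr2: "0 \<le> d r" "d r < int p" using dr S.p0 by auto
    have each: "nat ((\<lambda>_. 0::int) v - m v) + nat (d v - m v) \<le> p + p * n" if v: "v \<in> V" for v
    proof -
      have "\<bar>d v\<bar> \<le> int (p + p * n)" using sp v dr2 by fastforce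
      moreover have "int (nat ((\<lambda>_. 0::int) v - m v) + nat (d v - m v)) = \<bar>d v\<bar>"
        unfolding m_def by (simp add: min_def)
      ultimately show ?thesis by linarith
    qed
    have "k1 + k2 = (\<Sum>v\<in>V. nat ((\<lambda>_. 0::int) v - m v) + nat (d v - m v))"
      unfolding k1_def k2_def by (simp add: sum.distrib)
    also have "\<dots> \<le> card V * (p + p * n)" using each sum_bounded_above[of V _ "p + p * n"] by simp
    finally have kb: "k1 + k2 \<le> n * (p + p * n)" unfolding n_def .
    have len: "length (cs1 @ rev cs2) - 1 \<le> k1 + k2 + 1" using cs1(2) cs2(2) by simp
    have p1: "1 \<le> p" using assms by simp
    have a1: "p * n \<le> p * n * n" using n1 by simp
    have a2: "1 \<le> p * n * n" using n1 p1 by (simp add: Suc_le_eq)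
    have a3: "n * (p + p * n) = p * n + p * n * n" by (simp add: algebra_simps)
    have a4: "3 * p * n\<^sup>2 = 3 * (p * n * n)" by (simp add: power2_eq_square algebra_simps)
    have "length (cs1 @ rev cs2) - 1 \<le> 3 * p * n\<^sup>2" using len kb a1 a2 a3 a4 by linarith
    thus ?thesis using rs2 n_def by blast
  qed
qed

end
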